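(* Let $M\in\mathbb{N}$ and let $c$ and $c_j$, $j\geq 1$, be proper series in $\ell_{\infty,M}(X^\ast,\mathbb{K})$ with $\|c-c_j\|_{\ell_\infty,M}\to 0$ as $j\to\infty$. Then for $N\in\mathbb{N}$ sufficiently large, $$\sum_{n=1}^\infty \|c^{\sqcup\!\sqcup\, n}-c_j^{\sqcup\!\sqcup\, n}\|_{\ell_\infty,N}\to 0\quad\text{as } j\to\infty.$$
   Context: $\mathbb{K}\in\{\mathbb{R},\mathbb{C}\}$. $X=\{x_0,\ldots,x_m\}$ is a finite alphabet, $X^\ast$ its set of words (including the empty word $\emptyset$), $|\eta|$ the length of $\eta$. A series $c\colon X^\ast\to\mathbb{K}$ is proper if $(c,\emptyset)=0$. For $M>0$, $\|c\|_{\ell_\infty,M}=\sup_\eta|(c,\eta)|/(M^{|\eta|}|\eta|!)$ and $\ell_{\infty,M}(X^\ast,\mathbb{K})$ is the Banach space of series with finite such norm. The shuffle product is the bilinear product determined on words by $(x_i\eta)\sqcup\!\sqcup(x_j\xi)=x_i(\eta\sqcup\!\sqcup(x_j\xi))+x_j((x_i\eta)\sqcup\!\sqcup\xi)$, $\eta\sqcup\!\sqcup\emptyset=\emptyset\sqcup\!\sqcup\eta=\eta$, extended bilinearly to series; $c^{\sqcup\!\sqcup n}$ denotes the $n$-fold shuffle power. *)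

theory Defs
  imports "HOL-Analysis.Analysis"
begin

type_synonym ('a, 'k) series = "'a list \<Rightarrow> 'k"

definition proper :: "('a, 'k::zero) series \<Rightarrow> bool" where
  "proper c \<longleftrightarrow> c [] = 0"

definition ell_weight :: "real \<Rightarrow> ('a, 'k::real_normed_vector) series \<Rightarrow> 'a list \<Rightarrow> real" where
  "ell_weight M c \<eta> = norm (c \<eta>) / (M ^ length \<eta> * fact (length \<eta>))"

definition ell_norm :: "real \<Rightarrow> ('a, 'k::real_normed_vector) series \<Rightarrow> real" where
  "ell_norm M c = (SUP \<eta>. ell_weight M c \<eta>)"

definition in_ell :: "real \<Rightarrow> ('a, 'k::real_normed_vector) series \<Rightarrow> bool" where
  "in_ell M c \<longleftrightarrow> bdd_above (range (ell_weight M c))"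

text \<open>Coefficient of the word eta in the shuffle product of words xi and zeta.\<close>
fun shw :: "'a list \<Rightarrow> 'a list \<Rightarrow> 'a list \<Rightarrow> nat" where
  "shw [] z e = (if e = z then 1 else 0)"
| "shw (a # x) [] e = (if e = a # x then 1 else 0)"
| "shw (a # x) (b # z) [] = 0"
| "shw (a # x) (b # z) (d # e) =
     (if d = a then shw x (b # z) e else 0) + (if d = b then shw (a # x) z e else 0)"

text \<open>Shuffle product of series (alphabet finite, so the sum is finite).\<close>
definition shuffle :: "('a::finite, 'k::comm_ring_1) series \<Rightarrow> ('a, 'k) series \<Rightarrow> ('a, 'k) series" where
  "shuffle c d \<eta> = (\<Sum>(x, z) \<in> {(x, z). length x + length z = length \<eta>}.
      c x * d z * of_nat (shw x z \<eta>))"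

fun shpow :: "('a::finite, 'k::comm_ring_1) series \<Rightarrow> nat \<Rightarrow> ('a, 'k) series" where
  "shpow c 0 = (\<lambda>\<eta>. if \<eta> = [] then 1 else 0)"
| "shpow c (Suc n) = shuffle c (shpow c n)"

end

theory Submission
  imports Defs
begin


definition PS :: "nat \<Rightarrow> ('a list \<times> 'a list) set" where
  "PS L = {(x, z). length x + length z = L}"

lemma finite_PS: "finite (PS L :: ('a::finite list \<times> 'a list) set)"
proof -
  have fu: "finite (UNIV :: 'a set)" by simp
  have "PS L \<subseteq> {xs::'a list. set xs \<subseteq> UNIV \<and> length xs \<le> L} \<times> {xs::'a list. set xs \<subseteq> UNIV \<and> length xs \<le> L}"
    by (auto simp: PS_def)
  moreover have "finite ({xs::'a list. set xs \<subseteq> UNIV \<and> length xs \<le> L} \<times> {xs::'a list. set xs \<subseteq> UNIV \<and> length xs \<le> L})"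
    by (intro finite_cartesian_product finite_lists_length_le) (simp_all add: fu)
  ultimately show ?thesis by (rule finite_subset)
qed

definition shT :: "('a::finite, 'k::comm_ring_1) series \<Rightarrow> ('a, 'k) series \<Rightarrow> 'a list \<Rightarrow> 'k" where
  "shT F G e = (\<Sum>(x, z) \<in> PS (length e). F x * G z * of_nat (shw x z e))"

lemma shuffle_shT: "shuffle F G e = shT F G e"
  by (simp add: shuffle_def shT_def PS_def)

lemma shw_nil2: "shw x [] e = (if e = x then 1 else 0)"
  by (cases x) auto

lemma shw_cons: "shw x z (d # e) =
   (case x of [] \<Rightarrow> 0 | a # x' \<Rightarrow> if a = d then shw x' z e else 0) +
   (case z of [] \<Rightarrow> 0 | b # z' \<Rightarrow> if b = d then shw x z' e else 0)"
  by (cases x; cases z) (auto simp: shw_nil2)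

lemma shT_nil: "shT F G [] = F [] * G []"
proof -
  have h: "PS 0 = {([], [])}" by (auto simp: PS_def)
  show ?thesis unfolding shT_def by (simp add: h)
qed

lemma shT_cons:
  fixes F G :: "('a::finite, 'k::comm_ring_1) series" and d :: 'a
  shows "shT F G (d # e) = shT (\<lambda>x. F (d # x)) G e + shT F (\<lambda>z. G (d # z)) e"
proof -
  let ?L = "length e"
  define s1 where "s1 = (\<lambda>(x, z). F x * G z * of_nat (case x of [] \<Rightarrow> 0 | a # x' \<Rightarrow> if a = d then shw x' z e else 0))"
  define s2 where "s2 = (\<lambda>(x, z). F x * G z * of_nat (case z of [] \<Rightarrow> 0 | b # z' \<Rightarrow> if b = d then shw x z' e else 0))"
  have split: "shT F G (d # e) = (\<Sum>p \<in> PS (Suc ?L). s1 p) + (\<Sum>p \<in> PS (Suc ?L). s2 p)"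
    unfolding shT_def s1_def s2_def
    by (simp add: sum.distrib[symmetric] shw_cons distrib_left case_prod_beta)
  define g1 where "g1 = (\<lambda>(x, z::'a list). (d # x, z))"
  define g2 where "g2 = (\<lambda>(x::'a list, z). (x, d # z))"
  have i1: "inj g1" by (auto simp: g1_def inj_def)
  have i2: "inj g2" by (auto simp: g2_def inj_def)
  have sub1: "g1 ` PS ?L \<subseteq> PS (Suc ?L)" by (auto simp: g1_def PS_def)
  have sub2: "g2 ` PS ?L \<subseteq> PS (Suc ?L)" by (auto simp: g2_def PS_def)
  have z1: "\<forall>p \<in> PS (Suc ?L) - g1 ` PS ?L. s1 p = 0"
  proof
    fix p assume p: "p \<in> PS (Suc ?L) - g1 ` PS ?L"
    obtain x z where pxz: "p = (x, z)" by fastforce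
    show "s1 p = 0"
    proof (cases x)
      case Nil then show ?thesis by (simp add: s1_def pxz)
    next
      case (Cons a x')
      show ?thesis
      proof (cases "a = d")
        case True
        then have "p = g1 (x', z)" using Cons pxz by (simp add: g1_def)
        moreover have "(x', z) \<in> PS ?L" using p pxz Cons by (auto simp: PS_def)
        ultimately show ?thesis using p by blast
      qed (simp add: s1_def pxz Cons)
    qed
  qed
  have z2: "\<forall>p \<in> PS (Suc ?L) - g2 ` PS ?L. s2 p = 0"
  proof
    fix p assume p: "p \<in> PS (Suc ?L) - g2 ` PS ?L"
    obtain x z where pxz: "p = (x, z)" by fastforce
    show "s2 p = 0"
    proof (cases z)
      case Nil then show ?thesis by (simp add: s2_def pxz)
    next
      case (Cons a z')
      show ?thesis
      proof (cases "a = d")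
        case True
        then have "p = g2 (x, z')" using Cons pxz by (simp add: g2_def)
        moreover have "(x, z') \<in> PS ?L" using p pxz Cons by (auto simp: PS_def)
        ultimately show ?thesis using p by blast
      qed (simp add: s2_def pxz Cons)
    qed
  qed
  have "(\<Sum>p \<in> PS (Suc ?L). s1 p) = (\<Sum>p \<in> g1 ` PS ?L. s1 p)"
    using sum.mono_neutral_right[OF finite_PS sub1 z1] .
  also have "\<dots> = (\<Sum>p \<in> PS ?L. s1 (g1 p))"
    using sum.reindex[OF inj_on_subset[OF i1 subset_UNIV]] by simp
  also have "\<dots> = shT (\<lambda>x. F (d # x)) G e"
    unfolding shT_def by (rule sum.cong) (auto simp: s1_def g1_def)
  finally have A: "(\<Sum>p \<in> PS (Suc ?L). s1 p) = shT (\<lambda>x. F (d # x)) G e" .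
  have "(\<Sum>p \<in> PS (Suc ?L). s2 p) = (\<Sum>p \<in> g2 ` PS ?L. s2 p)"
    using sum.mono_neutral_right[OF finite_PS sub2 z2] .
  also have "\<dots> = (\<Sum>p \<in> PS ?L. s2 (g2 p))"
    using sum.reindex[OF inj_on_subset[OF i2 subset_UNIV]] by simp
  also have "\<dots> = shT F (\<lambda>z. G (d # z)) e"
    unfolding shT_def by (rule sum.cong) (auto simp: s2_def g2_def)
  finally have B: "(\<Sum>p \<in> PS (Suc ?L). s2 p) = shT F (\<lambda>z. G (d # z)) e" .
  show ?thesis using split A B by simp
qed



definition U :: "(nat \<Rightarrow> real) \<Rightarrow> (nat \<Rightarrow> real) \<Rightarrow> nat \<Rightarrow> real" where
  "U f g L = (\<Sum>i\<le>L. of_nat (L choose i) * f i * g (L - i))"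

lemma U_0: "U f g 0 = f 0 * g 0" by (simp add: U_def)

lemma U_Suc: "U f g (Suc L) = U (\<lambda>i. f (Suc i)) g L + U f (\<lambda>j. g (Suc j)) L"
proof -
  have A: "U f g (Suc L) = f 0 * g (Suc L) + (\<Sum>i\<le>L. of_nat (Suc L choose Suc i) * f (Suc i) * g (L - i))"
    unfolding U_def by (subst sum.atMost_Suc_shift) simp
  have B: "(\<Sum>i\<le>L. of_nat (Suc L choose Suc i) * f (Suc i) * g (L - i)) = U (\<lambda>i. f (Suc i)) g L
      + (\<Sum>i\<le>L. of_nat (L choose Suc i) * f (Suc i) * g (L - i))"
    by (simp add: U_def sum.distrib[symmetric] distrib_right)
  have "f 0 * g (Suc L) + (\<Sum>i\<le>L. of_nat (L choose Suc i) * f (Suc i) * g (L - i))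
      = (\<Sum>i\<le>Suc L. of_nat (L choose i) * f i * g (Suc L - i))"
    by (subst sum.atMost_Suc_shift) simp
  also have "\<dots> = (\<Sum>i\<le>L. of_nat (L choose i) * f i * g (Suc L - i))"
    by (simp add: sum.atMost_Suc)
  also have "\<dots> = U f (\<lambda>j. g (Suc j)) L"
    unfolding U_def by (rule sum.cong) (auto simp: Suc_diff_le)
  finally have C: "f 0 * g (Suc L) + (\<Sum>i\<le>L. of_nat (L choose Suc i) * f (Suc i) * g (L - i)) = U f (\<lambda>j. g (Suc j)) L" .
  show ?thesis using A B C by simp
qed

lemma shT_bound:
  fixes F G :: "('a::finite, 'k::real_normed_field) series"
  assumes "\<And>x. norm (F x) \<le> f (length x)" "\<And>z. norm (G z) \<le> g (length z)"
  shows "norm (shT F G e) \<le> U f g (length e)"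
  using assms
proof (induction e arbitrary: F G f g)
  case Nil
  have "norm (F [] * G []) \<le> f 0 * g 0"
    using Nil.prems[of "[]"] by (simp add: norm_mult mult_mono order_trans[OF norm_ge_zero])
  then show ?case by (simp add: shT_nil U_0)
next
  case (Cons d e)
  have "norm (shT F G (d # e)) \<le> norm (shT (\<lambda>x. F (d # x)) G e) + norm (shT F (\<lambda>z. G (d # z)) e)"
    by (simp add: shT_cons norm_triangle_ineq)
  also have "\<dots> \<le> U (\<lambda>i. f (Suc i)) g (length e) + U f (\<lambda>j. g (Suc j)) (length e)"
  proof (intro add_mono Cons.IH)
    fix x show "norm (F (d # x)) \<le> f (Suc (length x))" using Cons.prems(1)[of "d # x"] by simp
  next
    fix z show "norm (G (d # z)) \<le> g (Suc (length z))" using Cons.prems(2)[of "d # z"] by simp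
  qed (use Cons.prems in auto)
  finally show ?case by (simp add: U_Suc)
qed

lemma geo_sum: "(\<Sum>i\<le>L. (2::real) ^ (L - i)) = 2 ^ Suc L - 1"
proof (induction L)
  case (Suc L)
  have "(\<Sum>i\<le>Suc L. (2::real) ^ (Suc L - i)) = (\<Sum>i\<le>L. 2 * 2 ^ (L - i)) + 1"
    by (simp add: sum.atMost_Suc Suc_diff_le)
  also have "\<dots> = 2 * (2 ^ Suc L - 1) + 1" by (simp add: sum_distrib_left[symmetric] Suc)
  finally show ?case by simp
qed simp

lemma geo_sum1: "(\<Sum>i\<le>L. if i = 0 then 0 else (2::real) ^ (L - i)) \<le> 2 ^ L"
proof -
  have "(\<Sum>i\<le>L. if i = 0 then 0 else (2::real) ^ (L - i)) = (\<Sum>i\<le>L. (2::real) ^ (L - i)) - 2 ^ L"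
  proof -
    have "(\<Sum>i\<le>L. (2::real) ^ (L - i)) = (\<Sum>i\<le>L. (if i = 0 then 0 else (2::real) ^ (L - i)) + (if i = 0 then 2 ^ L else 0))"
      by (rule sum.cong) auto
    also have "\<dots> = (\<Sum>i\<le>L. if i = 0 then 0 else (2::real) ^ (L - i)) + 2 ^ L"
      by (simp add: sum.distrib)
    finally show ?thesis by simp
  qed
  then show ?thesis by (simp add: geo_sum)
qed



lemma shuffle_step:
  fixes d e :: "('a::finite, 'k::real_normed_field) series"
  assumes R: "R > 0" and a: "a \<ge> 0" and b: "\<beta> \<ge> 0" and pd: "proper d"
    and hd: "\<And>x. norm (d x) \<le> a * R ^ length x * fact (length x)"
    and he: "\<And>z. norm (e z) \<le> \<beta> * 2 ^ length z * R ^ length z * fact (length z)"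
    and ez: "\<And>z. length z < n \<Longrightarrow> e z = 0"
  shows "norm (shuffle d e \<eta>) \<le> a * \<beta> * 2 ^ length \<eta> * R ^ length \<eta> * fact (length \<eta>)"
    and "length \<eta> < Suc n \<Longrightarrow> shuffle d e \<eta> = 0"
proof -
  define L where "L = length \<eta>"
  define f where "f i = (if i = 0 then 0 else a * R ^ i * fact i)" for i :: nat
  define g where "g j = (if j < n then 0 else \<beta> * 2 ^ j * R ^ j * fact j)" for j :: nat
  have F: "norm (d x) \<le> f (length x)" for x
  proof (cases "x = []")
    case True then show ?thesis using pd by (simp add: proper_def f_def)
  qed (use hd in \<open>simp add: f_def\<close>)
  have G: "norm (e z) \<le> g (length z)" for z
    using he[of z] ez[of z] by (simp add: g_def)
  have main: "norm (shuffle d e \<eta>) \<le> U f g L"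
    unfolding shuffle_shT L_def by (rule shT_bound[of d f e g]) (use F G in auto)
  have tm: "of_nat (L choose i) * f i * g (L - i) =
      (if i = 0 \<or> L - i < n then 0 else (a * \<beta> * R ^ L * fact L) * 2 ^ (L - i))" if "i \<le> L" for i
  proof (cases "i = 0 \<or> L - i < n")
    case True then show ?thesis by (auto simp: f_def g_def)
  next
    case False
    have bf: "real (L choose i) * fact i * fact (L - i) = fact L"
    proof -
      have "real (fact i * fact (L - i) * (L choose i)) = real (fact L)"
        using binomial_fact_lemma[OF that] by simp
      then show ?thesis by (simp add: of_nat_mult mult_ac)
    qed
    have rp: "R ^ i * R ^ (L - i) = R ^ L" using that by (simp add: power_add[symmetric])
    have "of_nat (L choose i) * f i * g (L - i) =
        a * \<beta> * (R ^ i * R ^ (L - i)) * (real (L choose i) * fact i * fact (L - i)) * 2 ^ (L - i)"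
      using False by (simp add: f_def g_def mult_ac)
    also have "\<dots> = (a * \<beta> * R ^ L * fact L) * 2 ^ (L - i)" by (simp only: rp bf)
    finally show ?thesis using False by simp
  qed
  have Ueq: "U f g L = (\<Sum>i\<le>L. if i = 0 \<or> L - i < n then 0 else (a * \<beta> * R ^ L * fact L) * 2 ^ (L - i))"
    unfolding U_def by (rule sum.cong) (auto simp: tm)
  have C0: "a * \<beta> * R ^ L * fact L \<ge> 0" using a b R by simp
  have "U f g L \<le> (\<Sum>i\<le>L. (a * \<beta> * R ^ L * fact L) * (if i = 0 then 0 else (2::real) ^ (L - i)))"
    unfolding Ueq by (rule sum_mono) (use C0 in auto)
  also have "\<dots> = (a * \<beta> * R ^ L * fact L) * (\<Sum>i\<le>L. if i = 0 then 0 else (2::real) ^ (L - i))"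
    by (simp add: sum_distrib_left)
  also have "\<dots> \<le> (a * \<beta> * R ^ L * fact L) * 2 ^ L"
    by (rule mult_left_mono[OF geo_sum1 C0])
  finally show "norm (shuffle d e \<eta>) \<le> a * \<beta> * 2 ^ length \<eta> * R ^ length \<eta> * fact (length \<eta>)"
    using main by (simp add: L_def mult_ac)
  assume "length \<eta> < Suc n"
  then have "L < Suc n" by (simp add: L_def)
  then have "U f g L = 0" unfolding Ueq by (intro sum.neutral) auto
  then show "shuffle d e \<eta> = 0" using main by simp
qed



lemma shuffle_diff:
  "shuffle c P \<eta> - shuffle c' Q \<eta> = shuffle (\<lambda>x. c x - c' x) P \<eta> + shuffle c' (\<lambda>z. P z - Q z) \<eta>"
  unfolding shuffle_def
  by (simp add: sum_subtractf[symmetric] sum.distrib[symmetric] case_prod_beta algebra_simps)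

lemma P_bound:
  fixes c :: "('a::finite, 'k::real_normed_field) series"
  assumes R: "R > 0" and K: "K \<ge> 0" and pc: "proper c"
    and hc: "\<And>x. norm (c x) \<le> K * R ^ length x * fact (length x)"
  shows "norm (shpow c n \<eta>) \<le> K ^ n * 2 ^ length \<eta> * R ^ length \<eta> * fact (length \<eta>)
         \<and> (length \<eta> < n \<longrightarrow> shpow c n \<eta> = 0)"
proof (induction n arbitrary: \<eta>)
  case 0
  show ?case
  proof (cases "\<eta> = []")
    case False
    have "0 \<le> (2::real) ^ length \<eta> * R ^ length \<eta> * fact (length \<eta>)" using R by simp
    then show ?thesis using False by simp
  qed simp
next
  case (Suc n)
  have b: "norm (shpow c n z) \<le> K ^ n * 2 ^ length z * R ^ length z * fact (length z)" for z
    using Suc.IH by blast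
  have z: "length z < n \<Longrightarrow> shpow c n z = 0" for z using Suc.IH by blast
  note st = shuffle_step[OF R K zero_le_power[OF K, of n] pc hc, of "shpow c n" n \<eta>]
  show ?case using st b z by (simp add: mult_ac)
qed

lemma D_bound:
  fixes c c' :: "('a::finite, 'k::real_normed_field) series"
  assumes R: "R > 0" and K: "K \<ge> 0" and e: "\<epsilon> \<ge> 0" and pc: "proper c" and pc': "proper c'"
    and hc: "\<And>x. norm (c x) \<le> K * R ^ length x * fact (length x)"
    and hd: "\<And>x. norm (c x - c' x) \<le> \<epsilon> * R ^ length x * fact (length x)"
  shows "norm (shpow c n \<eta> - shpow c' n \<eta>) \<le> \<epsilon> * (2 * (K + \<epsilon> + 1)) ^ n * 2 ^ length \<eta> * R ^ length \<eta> * fact (length \<eta>)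
         \<and> (length \<eta> < n \<longrightarrow> shpow c n \<eta> - shpow c' n \<eta> = 0)"
proof (induction n arbitrary: \<eta>)
  case 0
  have "0 \<le> \<epsilon> * (2::real) ^ length \<eta> * R ^ length \<eta> * fact (length \<eta>)" using R e by simp
  then show ?case by simp
next
  case (Suc n)
  define T where "T = K + \<epsilon> + 1"
  define X where "X = (2::real) ^ length \<eta> * R ^ length \<eta> * fact (length \<eta>)"
  have X0: "X \<ge> 0" using R by (simp add: X_def)
  have T1: "T \<ge> 1" using K e by (simp add: T_def)
  have b: "norm (shpow c n z - shpow c' n z) \<le> (\<epsilon> * (2 * T) ^ n) * 2 ^ length z * R ^ length z * fact (length z)" for z
    using Suc.IH unfolding T_def by (simp add: mult_ac)
  have z: "length z < n \<Longrightarrow> shpow c n z - shpow c' n z = 0" for z using Suc.IH by blast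
  have pb: "norm (shpow c n z) \<le> K ^ n * 2 ^ length z * R ^ length z * fact (length z)"
    and pz: "length z < n \<longrightarrow> shpow c n z = 0" for z
    using P_bound[OF R K pc hc] by blast+
  have hc': "norm (c' x) \<le> (K + \<epsilon>) * R ^ length x * fact (length x)" for x
  proof -
    have "norm (c' x) \<le> norm (c x) + norm (c x - c' x)" using norm_triangle_ineq4[of "c x" "c x - c' x"] by simp
    also have "\<dots> \<le> (K + \<epsilon>) * R ^ length x * fact (length x)" using hc[of x] hd[of x] by (simp add: algebra_simps)
    finally show ?thesis .
  qed
  have pd: "proper (\<lambda>x. c x - c' x)" using pc pc' by (simp add: proper_def)
  have KE: "K + \<epsilon> \<ge> 0" using K e by simp
  have eT: "\<epsilon> * (2 * T) ^ n \<ge> 0" using e T1 by simp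
  note s1 = shuffle_step[OF R e zero_le_power[OF K, of n] pd hd, of "shpow c n" n \<eta>]
  note s2 = shuffle_step[OF R KE eT pc' hc', of "\<lambda>z. shpow c n z - shpow c' n z" n \<eta>]
  have eq: "shpow c (Suc n) \<eta> - shpow c' (Suc n) \<eta> =
      shuffle (\<lambda>x. c x - c' x) (shpow c n) \<eta> + shuffle c' (\<lambda>z. shpow c n z - shpow c' n z) \<eta>"
    by (simp add: shuffle_diff)
  have n1: "norm (shuffle (\<lambda>x. c x - c' x) (shpow c n) \<eta>) \<le> \<epsilon> * K ^ n * X"
    using s1(1) pb pz by (simp add: X_def mult_ac)
  have n2: "norm (shuffle c' (\<lambda>z. shpow c n z - shpow c' n z) \<eta>) \<le> (K + \<epsilon>) * (\<epsilon> * (2 * T) ^ n) * X"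
    using s2(1) b z by (simp add: X_def mult_ac)
  have KT: "K ^ n \<le> (2 * T) ^ n" using K T1 e by (intro power_mono) (auto simp: T_def)
  have ar: "\<epsilon> * K ^ n + (K + \<epsilon>) * (\<epsilon> * (2 * T) ^ n) \<le> \<epsilon> * (2 * T) ^ Suc n"
  proof -
    have "\<epsilon> * K ^ n \<le> \<epsilon> * (2 * T) ^ n" by (rule mult_left_mono[OF KT e])
    then have "\<epsilon> * K ^ n + (K + \<epsilon>) * (\<epsilon> * (2 * T) ^ n) \<le> (\<epsilon> * (2 * T) ^ n) * T"
      unfolding T_def by (simp add: distrib_left distrib_right mult_ac)
    also have "\<dots> \<le> (\<epsilon> * (2 * T) ^ n) * (2 * T)" using eT T1 by (intro mult_left_mono) auto
    finally show ?thesis by (simp add: mult_ac)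
  qed
  have "norm (shpow c (Suc n) \<eta> - shpow c' (Suc n) \<eta>) \<le> \<epsilon> * K ^ n * X + (K + \<epsilon>) * (\<epsilon> * (2 * T) ^ n) * X"
    unfolding eq by (rule order_trans[OF norm_triangle_ineq add_mono[OF n1 n2]])
  also have "\<dots> = (\<epsilon> * K ^ n + (K + \<epsilon>) * (\<epsilon> * (2 * T) ^ n)) * X" by (simp add: algebra_simps)
  also have "\<dots> \<le> \<epsilon> * (2 * T) ^ Suc n * X" using ar X0 by (rule mult_right_mono)
  finally have A: "norm (shpow c (Suc n) \<eta> - shpow c' (Suc n) \<eta>) \<le> \<epsilon> * (2 * T) ^ Suc n * X" .
  have B: "length \<eta> < Suc n \<longrightarrow> shpow c (Suc n) \<eta> - shpow c' (Suc n) \<eta> = 0"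
  proof
    assume l: "length \<eta> < Suc n"
    have "shuffle (\<lambda>x. c x - c' x) (shpow c n) \<eta> = 0"
      by (rule s1(2)) (use pb pz l in auto)
    moreover have "shuffle c' (\<lambda>z. shpow c n z - shpow c' n z) \<eta> = 0"
      by (rule s2(2)) (use b z l in \<open>auto simp: mult_ac\<close>)
    ultimately show "shpow c (Suc n) \<eta> - shpow c' (Suc n) \<eta> = 0" unfolding eq by simp
  qed
  show ?case using A B by (simp add: T_def X_def mult_ac)
qed



lemma weight_bound:
  fixes D :: "('a, 'k::real_normed_field) series"
  assumes R: "R > 0" and N: "N > 0" and e: "\<epsilon> \<ge> 0" and T: "T \<ge> 1" and TN: "8 * T * R \<le> N"
    and b: "norm (D \<eta>) \<le> \<epsilon> * (2 * T) ^ n * 2 ^ length \<eta> * R ^ length \<eta> * fact (length \<eta>)"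
    and z: "length \<eta> < n \<longrightarrow> D \<eta> = 0"
  shows "ell_weight N D \<eta> \<le> \<epsilon> * (1 / 2) ^ n"
proof (cases "length \<eta> < n")
  case True
  then show ?thesis using z e by (simp add: ell_weight_def)
next
  case False
  define L where "L = length \<eta>"
  define q where "q = 2 * R / N"
  have q0: "q \<ge> 0" using R N by (simp add: q_def)
  have RT: "R \<le> T * R" using mult_right_mono[OF T, of R] R by simp
  have h2: "2 * R \<le> N" using RT TN R by (simp only: mult.assoc)
  have q1: "q \<le> 1" using R N h2 unfolding q_def by (simp add: field_simps)
  have qT: "2 * T * q \<le> 1 / 2" using R N T TN unfolding q_def by (simp add: field_simps)
  have den: "N ^ L * fact L > 0" using N by simp
  have "ell_weight N D \<eta> = norm (D \<eta>) / (N ^ L * fact L)" by (simp add: ell_weight_def L_def)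
  also have "\<dots> \<le> (\<epsilon> * (2 * T) ^ n * 2 ^ L * R ^ L * fact L) / (N ^ L * fact L)"
    unfolding L_def by (rule divide_right_mono[OF b]) (use den in \<open>simp add: L_def\<close>)
  also have "\<dots> = \<epsilon> * (2 * T) ^ n * q ^ L"
    using N by (simp add: q_def power_divide power_mult_distrib field_simps)
  also have "\<dots> \<le> \<epsilon> * (2 * T) ^ n * q ^ n"
    using False q0 q1 e T by (intro mult_left_mono power_decreasing) (auto simp: L_def)
  also have "\<dots> = \<epsilon> * (2 * T * q) ^ n" by (simp add: power_mult_distrib)
  also have "\<dots> \<le> \<epsilon> * (1 / 2) ^ n"
    using qT q0 T e by (intro mult_left_mono power_mono) auto
  finally show ?thesis .
qed



lemma fixed_j:
  fixes c c' :: "('a::finite, 'k::real_normed_field) series"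
  assumes R: "R > 0" and N: "N > 0" and K: "K \<ge> 0" and e: "\<epsilon> \<ge> 0" and e1: "\<epsilon> \<le> 1"
    and pc: "proper c" and pc': "proper c'"
    and hc: "\<And>x. norm (c x) \<le> K * R ^ length x * fact (length x)"
    and hd: "\<And>x. norm (c x - c' x) \<le> \<epsilon> * R ^ length x * fact (length x)"
    and KN: "8 * (K + 2) * R \<le> N"
  shows "(\<forall>n. in_ell N (\<lambda>\<eta>. shpow c n \<eta> - shpow c' n \<eta>)) \<and>
     summable (\<lambda>n. ell_norm N (\<lambda>\<eta>. shpow c (Suc n) \<eta> - shpow c' (Suc n) \<eta>)) \<and>
     0 \<le> (\<Sum>n. ell_norm N (\<lambda>\<eta>. shpow c (Suc n) \<eta> - shpow c' (Suc n) \<eta>)) \<and>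
     (\<Sum>n. ell_norm N (\<lambda>\<eta>. shpow c (Suc n) \<eta> - shpow c' (Suc n) \<eta>)) \<le> \<epsilon>"
proof -
  define T where "T = K + \<epsilon> + 1"
  have T1: "T \<ge> 1" using K e by (simp add: T_def)
  have TN: "8 * T * R \<le> N"
  proof -
    have "8 * T * R \<le> 8 * (K + 2) * R" using R e1 by (intro mult_right_mono) (auto simp: T_def)
    then show ?thesis using KN by linarith
  qed
  define D where "D n = (\<lambda>\<eta>. shpow c n \<eta> - shpow c' n \<eta>)" for n
  have W: "ell_weight N (D n) \<eta> \<le> \<epsilon> * (1 / 2) ^ n" for n \<eta>
  proof -
    note db = D_bound[OF R K e pc pc' hc hd, of n \<eta>]
    show ?thesis unfolding D_def
      by (rule weight_bound[OF R N e T1 TN]) (use db in \<open>auto simp: T_def\<close>)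
  qed
  have W0: "0 \<le> ell_weight N (D n) \<eta>" for n \<eta> using N by (simp add: ell_weight_def)
  have inell: "in_ell N (D n)" for n
    unfolding in_ell_def by (rule bdd_aboveI2[where M = "\<epsilon> * (1 / 2) ^ n"]) (rule W)
  have nle: "ell_norm N (D n) \<le> \<epsilon> * (1 / 2) ^ n" for n
    unfolding ell_norm_def by (rule cSUP_least) (auto intro: W)
  have nge: "0 \<le> ell_norm N (D n)" for n
  proof -
    have "ell_weight N (D n) [] \<le> ell_norm N (D n)"
      unfolding ell_norm_def using inell[of n] unfolding in_ell_def by (rule cSUP_upper[rotated]) simp
    then show ?thesis using W0[of n "[]"] by linarith
  qed
  have sg: "summable (\<lambda>n. \<epsilon> * (1 / 2) ^ Suc n)"
    by (intro summable_mult summable_Suc_iff[THEN iffD2] summable_geometric) simp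
  have sgv: "(\<Sum>n. \<epsilon> * (1 / 2) ^ Suc n) = \<epsilon>"
  proof -
    have "(\<Sum>n. \<epsilon> * (1 / 2) ^ Suc n) = (\<epsilon> / 2) * (\<Sum>n. (1 / 2::real) ^ n)"
      by (subst suminf_mult[symmetric]) (auto intro: summable_geometric)
    also have "\<dots> = \<epsilon>" by (simp add: suminf_geometric)
    finally show ?thesis .
  qed
  have sm: "summable (\<lambda>n. ell_norm N (D (Suc n)))"
    by (rule summable_comparison_test'[OF sg, where N = 0]) (metis abs_of_nonneg nge nle real_norm_def)
  have "(\<Sum>n. ell_norm N (D (Suc n))) \<le> (\<Sum>n. \<epsilon> * (1 / 2) ^ Suc n)"
    by (rule suminf_le[OF _ sm sg]) (use nle in blast)
  then have le: "(\<Sum>n. ell_norm N (D (Suc n))) \<le> \<epsilon>" using sgv by simp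
  have ge: "0 \<le> (\<Sum>n. ell_norm N (D (Suc n)))" by (rule suminf_nonneg[OF sm]) (use nge in auto)
  show ?thesis using inell sm le ge unfolding D_def by auto
qed


theorem lemma3p5:
  fixes c :: "('a::finite, 'k::real_normed_field) series"
    and cj :: "nat \<Rightarrow> ('a, 'k) series"
    and M :: nat
  assumes "M > 0"
    and "proper c" and "in_ell (real M) c"
    and "\<And>j. proper (cj j)" and "\<And>j. in_ell (real M) (cj j)"
    and "(\<lambda>j. ell_norm (real M) (\<lambda>\<eta>. c \<eta> - cj j \<eta>)) \<longlonglongrightarrow> 0"
  shows "\<exists>N0::nat. \<forall>N\<ge>N0. N > 0 \<and>
     (\<forall>\<^sub>F j in sequentially.
        (\<forall>n. in_ell (real N) (\<lambda>\<eta>. shpow c n \<eta> - shpow (cj j) n \<eta>)) \<and>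
        summable (\<lambda>n. ell_norm (real N) (\<lambda>\<eta>. shpow c (Suc n) \<eta> - shpow (cj j) (Suc n) \<eta>))) \<and>
     (\<lambda>j. \<Sum>n. ell_norm (real N) (\<lambda>\<eta>. shpow c (Suc n) \<eta> - shpow (cj j) (Suc n) \<eta>))
        \<longlonglongrightarrow> 0"
proof -
  define R where "R = real M"
  have R: "R > 0" using assms(1) by (simp add: R_def)
  have wup: "ell_weight R d \<eta> \<le> ell_norm R d" if "in_ell R d" for d :: "('a, 'k) series" and \<eta>
    using that unfolding in_ell_def ell_norm_def by (rule cSUP_upper[rotated]) simp
  have pw: "norm (d \<eta>) \<le> ell_norm R d * R ^ length \<eta> * fact (length \<eta>)" if "in_ell R d"
    for d :: "('a, 'k) series" and \<eta>
  proof -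
    have den: "R ^ length \<eta> * fact (length \<eta>) > 0" using R by simp
    have "norm (d \<eta>) / (R ^ length \<eta> * fact (length \<eta>)) \<le> ell_norm R d"
      using wup[OF that, of \<eta>] by (simp add: ell_weight_def)
    then show ?thesis using den by (simp add: pos_divide_le_eq mult_ac)
  qed
  have nn: "0 \<le> ell_norm R d" if "in_ell R d" for d :: "('a, 'k) series"
  proof -
    have "0 \<le> ell_weight R d []" by (simp add: ell_weight_def)
    then show ?thesis using wup[OF that, of "[]"] by linarith
  qed
  have indiff: "in_ell R (\<lambda>\<eta>. c \<eta> - cj j \<eta>)" for j
    unfolding in_ell_def
  proof (rule bdd_aboveI2[where M = "ell_norm R c + ell_norm R (cj j)"])
    fix \<eta> :: "'a list"
    have "ell_weight R (\<lambda>\<eta>. c \<eta> - cj j \<eta>) \<eta> \<le> ell_weight R c \<eta> + ell_weight R (cj j) \<eta>"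
      unfolding ell_weight_def add_divide_distrib[symmetric]
      by (rule divide_right_mono[OF norm_triangle_ineq4]) (use R in simp)
    also have "\<dots> \<le> ell_norm R c + ell_norm R (cj j)"
      using wup[of c \<eta>] wup[of "cj j" \<eta>] assms(3,5) unfolding R_def by (intro add_mono) auto
    finally show "ell_weight R (\<lambda>\<eta>. c \<eta> - cj j \<eta>) \<eta> \<le> ell_norm R c + ell_norm R (cj j)" .
  qed
  define K where "K = ell_norm R c"
  define \<epsilon> where "\<epsilon> j = ell_norm R (\<lambda>\<eta>. c \<eta> - cj j \<eta>)" for j
  have K: "K \<ge> 0" unfolding K_def using nn assms(3) R_def by simp
  have e0: "\<epsilon> j \<ge> 0" for j unfolding \<epsilon>_def using nn indiff by simp
  have hc: "norm (c x) \<le> K * R ^ length x * fact (length x)" for x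
    unfolding K_def using pw assms(3) R_def by simp
  have hd: "norm (c x - cj j x) \<le> \<epsilon> j * R ^ length x * fact (length x)" for j x
    unfolding \<epsilon>_def using pw[OF indiff] by simp
  have lim: "\<epsilon> \<longlonglongrightarrow> 0" using assms(6) unfolding \<epsilon>_def R_def by simp
  have ev: "\<forall>\<^sub>F j in sequentially. \<epsilon> j < 1" using order_tendstoD(2)[OF lim] by simp
  show ?thesis
  proof (intro exI[of _ "nat \<lceil>8 * (K + 2) * R\<rceil> + 1"] allI impI)
    fix N :: nat assume NN: "nat \<lceil>8 * (K + 2) * R\<rceil> + 1 \<le> N"
    have "8 * (K + 2) * R \<le> real (nat \<lceil>8 * (K + 2) * R\<rceil>)" by (rule real_nat_ceiling_ge)
    moreover have "real (nat \<lceil>8 * (K + 2) * R\<rceil>) + 1 \<le> real N" using NN by linarith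
    ultimately have NR: "8 * (K + 2) * R \<le> real N" by linarith
    have Np: "N > 0" using NN by simp
    have fj: "\<forall>\<^sub>F j in sequentially.
      (\<forall>n. in_ell (real N) (\<lambda>\<eta>. shpow c n \<eta> - shpow (cj j) n \<eta>)) \<and>
      summable (\<lambda>n. ell_norm (real N) (\<lambda>\<eta>. shpow c (Suc n) \<eta> - shpow (cj j) (Suc n) \<eta>)) \<and>
      0 \<le> (\<Sum>n. ell_norm (real N) (\<lambda>\<eta>. shpow c (Suc n) \<eta> - shpow (cj j) (Suc n) \<eta>)) \<and>
      (\<Sum>n. ell_norm (real N) (\<lambda>\<eta>. shpow c (Suc n) \<eta> - shpow (cj j) (Suc n) \<eta>)) \<le> \<epsilon> j"
      using ev
    proof eventually_elim
      case (elim j)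
      show ?case
        by (rule fixed_j[OF R _ K e0 _ assms(2) assms(4) hc hd NR]) (use elim Np in auto)
    qed
    have A: "\<forall>\<^sub>F j in sequentially.
        (\<forall>n. in_ell (real N) (\<lambda>\<eta>. shpow c n \<eta> - shpow (cj j) n \<eta>)) \<and>
        summable (\<lambda>n. ell_norm (real N) (\<lambda>\<eta>. shpow c (Suc n) \<eta> - shpow (cj j) (Suc n) \<eta>))"
      using fj by (rule eventually_mono) blast
    have B: "(\<lambda>j. \<Sum>n. ell_norm (real N) (\<lambda>\<eta>. shpow c (Suc n) \<eta> - shpow (cj j) (Suc n) \<eta>))
        \<longlonglongrightarrow> 0"
    proof (rule tendsto_sandwich[OF _ _ tendsto_const lim])
      show "\<forall>\<^sub>F j in sequentially. 0 \<le> (\<Sum>n. ell_norm (real N) (\<lambda>\<eta>. shpow c (Suc n) \<eta> - shpow (cj j) (Suc n) \<eta>))"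
        using fj by (rule eventually_mono) blast
      show "\<forall>\<^sub>F j in sequentially. (\<Sum>n. ell_norm (real N) (\<lambda>\<eta>. shpow c (Suc n) \<eta> - shpow (cj j) (Suc n) \<eta>)) \<le> \<epsilon> j"
        using fj by (rule eventually_mono) blast
    qed
    show "N > 0 \<and>
     (\<forall>\<^sub>F j in sequentially.
        (\<forall>n. in_ell (real N) (\<lambda>\<eta>. shpow c n \<eta> - shpow (cj j) n \<eta>)) \<and>
        summable (\<lambda>n. ell_norm (real N) (\<lambda>\<eta>. shpow c (Suc n) \<eta> - shpow (cj j) (Suc n) \<eta>))) \<and>
     (\<lambda>j. \<Sum>n. ell_norm (real N) (\<lambda>\<eta>. shpow c (Suc n) \<eta> - shpow (cj j) (Suc n) \<eta>))
        \<longlonglongrightarrow> 0" using Np A B by blast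
  qed
qed

end
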